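(* Let $(q,E)$ be an annotated CQ. (1) If there is any CQ that fits $E$, then there is a $\preceq^{\mathrm{edit\text{-}dist}}$-repair for $(q,E)$. (2) If there is any CQ $q'$ that fits $E$ with $q\subseteq q'$, then there is a $\preceq^{\mathrm{edit\text{-}dist}}$-generalization for $(q,E)$. (3) If there is any CQ $q'$ that fits $E$ with $q'\subseteq q$, then there is a $\preceq^{\mathrm{edit\text{-}dist}}$-specialization for $(q,E)$. Moreover, there are at most finitely many $\preceq^{\mathrm{edit\text{-}dist}}$-repairs, $\preceq^{\mathrm{edit\text{-}dist}}$-generalizations, and $\preceq^{\mathrm{edit\text{-}dist}}$-specializations for $(q,E)$, up to equivalence.
   Context: All CQs are $q(x_1,\dots,x_k)\text{ :- }\alpha_1,\dots,\alpha_n$ (relational atoms, no constants, pairwise distinct answer variables each occurring in an atom). Data examples are $(I,\mathbf a)$, $I$ a finite instance, $\mathbf a$ a $k$-tuple of its values; $[\![q]\!]$ is the set of data examples with $\mathbf a\in q(I)$; $\subseteq$ query containment, equivalence = containment both ways. An annotated CQ is $(q,E)$ with $E=(E^+,E^-)$ labeled examples; $q$ fits $E$ iff $E^+\subseteq[\![q]\!]$ and $E^-\cap[\![q]\!]=\emptyset$. $\mathrm{edit\text{-}dist}(q_1,q_2)=\min_\rho|\mathrm{core}(e_{q_1})\oplus\mathrm{core}(e_{\rho(q_2)})|$ over bijective variable renamings $\rho$ of $q_2(y_1,\dots,y_k)$ with $\rho(y_i)=x_i$, where $e_q$ is the canonical example (atoms of $q$ as facts, answer tuple distinguished), $\mathrm{core}$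 the homomorphism core, $\oplus$ symmetric difference of facts. $q'\preceq_q q''$ iff $\mathrm{edit\text{-}dist}(q,q')\le\mathrm{edit\text{-}dist}(q,q'')$; $\prec_q$ strict part. A $\preceq$-repair for $(q,E)$: a CQ $q'$ fitting $E$ with no CQ $q''$ fitting $E$ and $q''\prec_q q'$. A $\preceq$-generalization (resp. specialization): a CQ $q'$ fitting $E$ with $q\subseteq q'$ (resp. $q'\subseteq q$) such that no CQ $q''$ fitting $E$ with $q\subseteq q''$ (resp. $q''\subseteq q$) has $q''\prec_q q'$. Candidate CQs use only relation symbols occurring in $q$ and $E$. *)

theory Defs
  imports Main
begin

(* The arity of an occurrence is the length of its tuple; a "relation symbol" in the
   sense of the paper is identified with the pair (R, arity). *)
type_synonym 'r fact = "'r \<times> nat list"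

type_synonym 'r inst = "'r fact set"

type_synonym 'r dex = "'r inst \<times> nat list"

definition adom :: "'r inst \<Rightarrow> nat set" where
  "adom I = (\<Union>(R, ts)\<in>I. set ts)"

definition data_example :: "nat \<Rightarrow> 'r dex \<Rightarrow> bool" where
  "data_example k e \<longleftrightarrow> finite (fst e) \<and> length (snd e) = k \<and> set (snd e) \<subseteq> adom (fst e)"

type_synonym 'r cq = "nat list \<times> 'r fact set"

definition ans :: "'r cq \<Rightarrow> nat list" where "ans q = fst q"
definition atoms :: "'r cq \<Rightarrow> 'r fact set" where "atoms q = snd q"

definition wf_cq :: "'r cq \<Rightarrow> bool" where
  "wf_cq q \<longleftrightarrow> finite (atoms q) \<and> distinct (ans q) \<and>
     (\<forall>x\<in>set (ans q). \<exists>(R, ts)\<in>atoms q. x \<in> set ts)"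

definition hom_to :: "'r dex \<Rightarrow> 'r dex \<Rightarrow> bool" where
  "hom_to e1 e2 \<longleftrightarrow> (\<exists>h. (\<forall>(R, ts)\<in>fst e1. (R, map h ts) \<in> fst e2) \<and> map h (snd e1) = snd e2)"

definition canon :: "'r cq \<Rightarrow> 'r dex" where
  "canon q = (atoms q, ans q)"

definition in_sem :: "'r dex \<Rightarrow> 'r cq \<Rightarrow> bool" where
  "in_sem e q \<longleftrightarrow> hom_to (canon q) e"

definition cq_contained :: "'r cq \<Rightarrow> 'r cq \<Rightarrow> bool" where
  "cq_contained q1 q2 \<longleftrightarrow>
     (\<forall>e. data_example (length (snd e)) e \<longrightarrow> in_sem e q1 \<longrightarrow> in_sem e q2)"

definition cq_equiv :: "'r cq \<Rightarrow> 'r cq \<Rightarrow> bool" where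
  "cq_equiv q1 q2 \<longleftrightarrow> cq_contained q1 q2 \<and> cq_contained q2 q1"

definition is_core_of :: "'r inst \<Rightarrow> 'r dex \<Rightarrow> bool" where
  "is_core_of C e \<longleftrightarrow> C \<subseteq> fst e \<and> hom_to e (C, snd e) \<and>
     (\<forall>C'. C' \<subset> C \<longrightarrow> \<not> hom_to (C, snd e) (C', snd e))"

definition rename :: "(nat \<Rightarrow> nat) \<Rightarrow> 'r cq \<Rightarrow> 'r cq" where
  "rename \<rho> q = (map \<rho> (ans q), (\<lambda>(R, ts). (R, map \<rho> ts)) ` atoms q)"

(* edit distance: minimum over bijective renamings rho of the variables of q2 mapping the
   answer variables of q2 position-wise onto those of q1 (and over the choice of the cores,
   which are unique only up to isomorphism) *)
definition edit_dist :: "'r cq \<Rightarrow> 'r cq \<Rightarrow> nat" where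
  "edit_dist q1 q2 = Inf {card (C1 - C2 \<union> (C2 - C1)) | C1 C2 \<rho>.
      bij \<rho> \<and> map \<rho> (ans q2) = ans q1 \<and>
      is_core_of C1 (canon q1) \<and> is_core_of C2 (canon (rename \<rho> q2))}"

definition syms_inst :: "'r inst \<Rightarrow> ('r \<times> nat) set" where
  "syms_inst I = (\<lambda>(R, ts). (R, length ts)) ` I"

definition syms_ex :: "'r dex set \<Rightarrow> ('r \<times> nat) set" where
  "syms_ex E = (\<Union>e\<in>E. syms_inst (fst e))"

definition candidate :: "'r cq \<Rightarrow> 'r dex set \<Rightarrow> 'r dex set \<Rightarrow> 'r cq \<Rightarrow> bool" where
  "candidate q Ep En q' \<longleftrightarrow> wf_cq q' \<and> length (ans q') = length (ans q) \<and>
     syms_inst (atoms q') \<subseteq> syms_inst (atoms q) \<union> syms_ex Ep \<union> syms_ex En"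

definition fits :: "'r cq \<Rightarrow> 'r dex set \<Rightarrow> 'r dex set \<Rightarrow> bool" where
  "fits q' Ep En \<longleftrightarrow> (\<forall>e\<in>Ep. in_sem e q') \<and> (\<forall>e\<in>En. \<not> in_sem e q')"

definition is_repair :: "'r cq \<Rightarrow> 'r dex set \<Rightarrow> 'r dex set \<Rightarrow> 'r cq \<Rightarrow> bool" where
  "is_repair q Ep En q' \<longleftrightarrow> candidate q Ep En q' \<and> fits q' Ep En \<and>
     \<not> (\<exists>q''. candidate q Ep En q'' \<and> fits q'' Ep En \<and> edit_dist q q'' < edit_dist q q')"

definition is_generalization :: "'r cq \<Rightarrow> 'r dex set \<Rightarrow> 'r dex set \<Rightarrow> 'r cq \<Rightarrow> bool" where
  "is_generalization q Ep En q' \<longleftrightarrow> candidate q Ep En q' \<and> fits q' Ep En \<and> cq_contained q q' \<and>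
     \<not> (\<exists>q''. candidate q Ep En q'' \<and> fits q'' Ep En \<and> cq_contained q q'' \<and>
            edit_dist q q'' < edit_dist q q')"

definition is_specialization :: "'r cq \<Rightarrow> 'r dex set \<Rightarrow> 'r dex set \<Rightarrow> 'r cq \<Rightarrow> bool" where
  "is_specialization q Ep En q' \<longleftrightarrow> candidate q Ep En q' \<and> fits q' Ep En \<and> cq_contained q' q \<and>
     \<not> (\<exists>q''. candidate q Ep En q'' \<and> fits q'' Ep En \<and> cq_contained q'' q \<and>
            edit_dist q q'' < edit_dist q q')"

definition finitely_many_upto_equiv :: "('r cq \<Rightarrow> bool) \<Rightarrow> bool" where
  "finitely_many_upto_equiv P \<longleftrightarrow> (\<exists>F. finite F \<and> (\<forall>q'. P q' \<longrightarrow> (\<exists>q''\<in>F. cq_equiv q' q'')))"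

end

theory Submission
  imports Defs
begin


lemma hom_trans: "hom_to e1 e2 \<Longrightarrow> hom_to e2 e3 \<Longrightarrow> hom_to e1 e3"
proof -
  assume a: "hom_to e1 e2" "hom_to e2 e3"
  then obtain h g where h: "\<forall>(R, ts)\<in>fst e1. (R, map h ts) \<in> fst e2" "map h (snd e1) = snd e2"
    and g: "\<forall>(R, ts)\<in>fst e2. (R, map g ts) \<in> fst e3" "map g (snd e2) = snd e3"
    unfolding hom_to_def by blast
  have "\<forall>(R, ts)\<in>fst e1. (R, map (g o h) ts) \<in> fst e3" using h(1) g(1) by fastforce
  moreover have "map (g o h) (snd e1) = snd e3" using h(2) g(2) by (metis map_map)
  ultimately show ?thesis unfolding hom_to_def by blast
qed

lemma hom_sub: "C \<subseteq> I \<Longrightarrow> hom_to (C, a) (I, a)"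
  unfolding hom_to_def by (auto intro!: exI[of _ id])

lemma equiv_homs: "hom_to (canon q1) (canon q2) \<Longrightarrow> hom_to (canon q2) (canon q1) \<Longrightarrow> cq_equiv q1 q2"
  unfolding cq_equiv_def cq_contained_def in_sem_def using hom_trans by blast

lemma equiv_trans: "cq_equiv q1 q2 \<Longrightarrow> cq_equiv q2 q3 \<Longrightarrow> cq_equiv q1 q3"
  unfolding cq_equiv_def cq_contained_def by blast

lemma rename_equiv:
  assumes inj: "inj_on \<sigma> (adom (atoms q) \<union> set (ans q))"
  shows "cq_equiv q (rename \<sigma> q)"
proof (rule equiv_homs)
  show "hom_to (canon q) (canon (rename \<sigma> q))"
    unfolding hom_to_def canon_def rename_def atoms_def ans_def
    by (auto intro!: exI[of _ \<sigma>])
  let ?V = "adom (atoms q) \<union> set (ans q)"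
  let ?g = "inv_into ?V \<sigma>"
  have g: "map ?g (map \<sigma> ts) = ts" if "set ts \<subseteq> ?V" for ts
    using that inj by (induction ts) auto
  have ga: "map ?g (map \<sigma> (ans q)) = ans q" by (rule g) auto
  have gb: "(R, map ?g ts) \<in> atoms q" if "(R, ts) \<in> (\<lambda>(R, ts). (R, map \<sigma> ts)) ` atoms q" for R ts
  proof -
    from that obtain ts' where t: "(R, ts') \<in> atoms q" "ts = map \<sigma> ts'" by auto
    have "set ts' \<subseteq> ?V" using t(1) unfolding adom_def by auto
    then show ?thesis using t g by simp
  qed
  show "hom_to (canon (rename \<sigma> q)) (canon q)"
    unfolding hom_to_def
  proof (rule exI[of _ ?g], intro conjI)
    show "\<forall>(R, ts)\<in>fst (canon (rename \<sigma> q)). (R, map ?g ts) \<in> fst (canon q)"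
    proof (clarify)
      fix R ts assume "(R, ts) \<in> fst (canon (rename \<sigma> q))"
      then have "(R, ts) \<in> (\<lambda>(R, ts). (R, map \<sigma> ts)) ` atoms q"
        by (simp add: canon_def rename_def atoms_def)
      then have "(R, map ?g ts) \<in> atoms q" by (rule gb)
      then show "(R, map ?g ts) \<in> fst (canon q)" by (simp add: canon_def atoms_def)
    qed
    show "map ?g (snd (canon (rename \<sigma> q))) = snd (canon q)"
      using ga by (simp add: canon_def rename_def atoms_def ans_def del: map_map)
  qed
qed

lemma core_exists: assumes "finite I" shows "\<exists>C. is_core_of C (I, a)"
proof -
  let ?P = "\<lambda>C. C \<subseteq> I \<and> hom_to (I, a) (C, a)"
  have "?P I" unfolding hom_to_def by (auto intro!: exI[of _ id])
  then obtain C where C: "?P C" and min: "\<And>C'. ?P C' \<Longrightarrow> card C \<le> card C'"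
    using ex_has_least_nat[of ?P I card] by blast
  have fC: "finite C" using C assms finite_subset by blast
  show ?thesis unfolding is_core_of_def
  proof (intro exI conjI allI impI)
    show "C \<subseteq> fst (I,a)" using C by simp
    show "hom_to (I,a) (C, snd (I,a))" using C by simp
    fix C' assume "C' \<subset> C"
    show "\<not> hom_to (C, snd (I, a)) (C', snd (I, a))"
    proof
      assume "hom_to (C, snd (I, a)) (C', snd (I, a))"
      then have "?P C'" using C \<open>C' \<subset> C\<close> hom_trans by fastforce
      then have "card C \<le> card C'" by (rule min)
      moreover have "card C' < card C" using psubset_card_mono fC \<open>C' \<subset> C\<close> by blast
      ultimately show False by simp
    qed
  qed
qed

lemma bij_list: "distinct xs \<Longrightarrow> distinct ys \<Longrightarrow> length xs = length ys \<Longrightarrow> \<exists>\<rho>::nat\<Rightarrow>nat. bij \<rho> \<and> map \<rho> xs = ys"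
proof (induction xs arbitrary: ys)
  case Nil then show ?case by (auto intro: exI[of _ id])
next
  case (Cons x xs)
  then obtain y ys' where ys: "ys = y # ys'" by (cases ys) auto
  with Cons obtain \<rho> where r: "bij \<rho>" "map \<rho> xs = ys'" by auto
  define z where "z = \<rho> x"
  define \<tau> where "\<tau> = (\<lambda>w. if w = z then y else if w = y then z else w)"
  have "\<tau> o \<tau> = id" by (auto simp: \<tau>_def fun_eq_iff)
  then have bt: "bij \<tau>" using o_bij by blast
  have zn: "z \<notin> set ys'" using r Cons.prems z_def by (auto simp: bij_def inj_eq)
  have yn: "y \<notin> set ys'" using Cons.prems ys by simp
  have m: "map \<tau> ys' = ys'" using zn yn by (intro map_idI) (auto simp: \<tau>_def)
  have "map (\<tau> o \<rho>) xs = map \<tau> (map \<rho> xs)" by (rule map_map[symmetric])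
  also have "\<dots> = ys'" using m r(2) by simp
  finally have "map (\<tau> o \<rho>) xs = ys'" .
  moreover have "\<tau> (\<rho> x) = y" by (simp add: \<tau>_def z_def)
  ultimately have mm: "map (\<tau> o \<rho>) (x # xs) = ys" unfolding ys by simp
  have "bij (\<tau> o \<rho>)" by (rule bij_comp[OF r(1) bt])
  with mm show ?case by blast
qed



definition UU :: "('r \<times> nat) set \<Rightarrow> nat \<Rightarrow> 'r fact set" where
  "UU S M = {(R, ts). (R, length ts) \<in> S \<and> set ts \<subseteq> {0..M}}"

lemma finite_UU: assumes fS: "finite S" shows "finite (UU S M)"
proof -
  have "UU S M \<subseteq> (\<Union>p\<in>S. (\<lambda>ts. (fst p, ts)) ` {ts. set ts \<subseteq> {0..M} \<and> length ts = snd p})"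
    unfolding UU_def by force
  moreover have "finite (\<Union>p\<in>S. (\<lambda>ts. (fst p, ts)) ` {ts. set ts \<subseteq> {0..M} \<and> length ts = snd p})"
    using fS by (intro finite_UN_I finite_imageI finite_lists_length_eq) auto
  ultimately show ?thesis by (rule finite_subset)
qed

lemma adom_card:
  assumes "finite D" "\<forall>x\<in>D. length (snd x) \<le> A"
  shows "card (adom D) \<le> card D * A"
proof -
  have "adom D = (\<Union>x\<in>D. set (snd x))" unfolding adom_def by auto
  then have "card (adom D) \<le> (\<Sum>x\<in>D. card (set (snd x)))" using card_UN_le[OF assms(1)] by simp
  also have "\<dots> \<le> (\<Sum>x\<in>D. A)" using assms(2) by (intro sum_mono) (meson card_length le_trans)
  finally show ?thesis by simp
qed

lemma finite_adom: "finite D \<Longrightarrow> finite (adom D)"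
  unfolding adom_def by auto

lemma adom_mono: "C \<subseteq> D \<Longrightarrow> adom C \<subseteq> adom D"
  unfolding adom_def by auto



lemma main_fin:
  fixes q :: "'r cq" and S :: "('r \<times> nat) set" and d :: nat
  assumes wq: "wf_cq q" and fS: "finite S"
  shows "\<exists>F. finite F \<and> (\<forall>q'. wf_cq q' \<and> length (ans q') = length (ans q) \<and>
     syms_inst (atoms q') \<subseteq> S \<and> edit_dist q q' \<le> d \<longrightarrow> (\<exists>q''\<in>F. cq_equiv q' q''))"
proof -
  define A where "A = Max (insert 0 (snd ` S))"
  define V0 where "V0 = set (ans q)"
  define m0 where "m0 = Max (insert 0 V0)"
  define K where "K = card (adom (atoms q)) + d * A"
  define M where "M = m0 + K"
  define F where "F = (\<lambda>C. (ans q, C)) ` Pow (UU S M)"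
  have fq: "finite (atoms q)" and dq: "distinct (ans q)" using wq unfolding wf_cq_def by auto
  have "finite F" using finite_UU[OF fS] F_def by simp
  moreover have "\<exists>q''\<in>F. cq_equiv q' q''"
    if q': "wf_cq q'" "length (ans q') = length (ans q)" "syms_inst (atoms q') \<subseteq> S" "edit_dist q q' \<le> d" for q'
  proof -
    have fq': "finite (atoms q')" and dq': "distinct (ans q')" using q'(1) unfolding wf_cq_def by auto
    obtain \<rho>0 :: "nat \<Rightarrow> nat" where rho0: "bij \<rho>0" "map \<rho>0 (ans q') = ans q"
      using bij_list[OF dq' dq q'(2)] by blast
    obtain C10 where C10: "is_core_of C10 (canon q)" using core_exists[OF fq] unfolding canon_def by blast
    have "finite (atoms (rename \<rho>0 q'))" using fq' by (simp add: rename_def atoms_def)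
    then obtain C20 where C20: "is_core_of C20 (canon (rename \<rho>0 q'))"
      using core_exists unfolding canon_def by blast
    let ?Set = "{card (C1 - C2 \<union> (C2 - C1)) | C1 C2 \<rho>. bij \<rho> \<and> map \<rho> (ans q') = ans q \<and>
      is_core_of C1 (canon q) \<and> is_core_of C2 (canon (rename \<rho> q'))}"
    have "?Set \<noteq> {}" using rho0 C10 C20 by blast
    then have "edit_dist q q' \<in> ?Set" unfolding edit_dist_def by (rule Inf_nat_def1)
    then obtain C1 C2 \<rho> where rho: "bij \<rho>" "map \<rho> (ans q') = ans q"
      and C1: "is_core_of C1 (canon q)" and C2: "is_core_of C2 (canon (rename \<rho> q'))"
      and ed: "edit_dist q q' = card (C1 - C2 \<union> (C2 - C1))" by blast
    define Q where "Q = rename \<rho> q'"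
    have atQ: "atoms Q = (\<lambda>(R, ts). (R, map \<rho> ts)) ` atoms q'" and anQ: "ans Q = ans q"
      using rho(2) by (auto simp: Q_def rename_def atoms_def ans_def)
    have eq1: "cq_equiv q' Q" unfolding Q_def
      by (rule rename_equiv) (use rho(1) bij_is_inj inj_on_subset in blast)
    have C2sub: "C2 \<subseteq> atoms Q" and C2hom: "hom_to (atoms Q, ans q) (C2, ans q)"
      using C2 anQ by (auto simp: is_core_of_def canon_def Q_def)
    have eq2: "cq_equiv Q (ans q, C2)"
      by (rule equiv_homs) (use C2hom hom_sub[OF C2sub] anQ in \<open>auto simp: canon_def atoms_def ans_def\<close>)
    have fC2: "finite C2" using C2sub atQ fq' finite_subset by fastforce
    have C1sub: "C1 \<subseteq> atoms q" using C1 by (auto simp: is_core_of_def canon_def)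
    have fC1: "finite C1" using C1sub fq finite_subset by blast
    have cD: "card (C2 - C1) \<le> d"
    proof -
      have "card (C2 - C1) \<le> card (C1 - C2 \<union> (C2 - C1))" using fC1 fC2 by (intro card_mono) auto
      then show ?thesis using ed q'(4) by simp
    qed
    have symC2: "(R, length ts) \<in> S" if "(R, ts) \<in> C2" for R ts
    proof -
      from that C2sub atQ obtain ts' where "(R, ts') \<in> atoms q'" "ts = map \<rho> ts'" by auto
      then have "(R, length ts) \<in> syms_inst (atoms q')" unfolding syms_inst_def by force
      then show ?thesis using q'(3) by blast
    qed
    have lenA: "\<forall>x\<in>C2 - C1. length (snd x) \<le> A"
    proof
      fix x assume "x \<in> C2 - C1"
      then have "(fst x, length (snd x)) \<in> S" using symC2[of "fst x" "snd x"] by simp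
      then have "length (snd x) \<in> snd ` S" by (rule image_eqI[rotated]) simp
      then show "length (snd x) \<le> A" unfolding A_def using fS by (intro Max_ge) auto
    qed
    have cAD: "card (adom (C2 - C1)) \<le> d * A"
    proof -
      have "card (adom (C2 - C1)) \<le> card (C2 - C1) * A" using adom_card[OF _ lenA] fC2 by blast
      also have "\<dots> \<le> d * A" using cD by (rule mult_le_mono1)
      finally show ?thesis .
    qed
    define V where "V = adom C2 \<union> V0"
    have fV: "finite V" unfolding V_def V0_def using finite_adom[OF fC2] by simp
    have "V - V0 \<subseteq> adom (atoms q) \<union> adom (C2 - C1)"
      using adom_mono[OF C1sub] unfolding V_def adom_def by blast
    then have "card (V - V0) \<le> card (adom (atoms q) \<union> adom (C2 - C1))"
      using finite_adom[OF fq] finite_adom[of "C2 - C1"] fC2 by (intro card_mono) auto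
    also have "\<dots> \<le> card (adom (atoms q)) + card (adom (C2 - C1))" by (rule card_Un_le)
    also have "\<dots> \<le> K" unfolding K_def using cAD by simp
    finally have cV: "card (V - V0) \<le> K" .
    have fV0: "finite V0" unfolding V0_def by simp
    have V0M: "V0 \<subseteq> {0..m0}" unfolding m0_def using fV0 by auto
    have "card V0 \<le> Suc m0" using card_mono[OF _ V0M] fV0 by simp
    then have cW: "K \<le> card ({0..M} - V0)"
      using V0M fV0 by (subst card_Diff_subset) (auto simp: M_def)
    obtain f where f: "f ` (V - V0) \<subseteq> {0..M} - V0" "inj_on f (V - V0)"
      using card_le_inj[OF _ _ le_trans[OF cV cW]] fV by blast
    define \<sigma> where "\<sigma> = (\<lambda>x. if x \<in> V0 then x else f x)"
    have injs: "inj_on \<sigma> V"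
    proof (rule inj_onI)
      fix x y assume "x \<in> V" "y \<in> V" "\<sigma> x = \<sigma> y"
      then show "x = y" using f unfolding \<sigma>_def inj_on_def by (auto split: if_splits)
    qed
    have sM: "\<sigma> ` V \<subseteq> {0..M}" using f V0M unfolding \<sigma>_def M_def by auto
    have sans: "map \<sigma> (ans q) = ans q" unfolding \<sigma>_def V0_def by (intro map_idI) auto
    have eq3: "cq_equiv (ans q, C2) (rename \<sigma> (ans q, C2))"
      by (rule rename_equiv) (use injs in \<open>simp add: V_def V0_def atoms_def ans_def\<close>)
    have "(\<lambda>(R, ts). (R, map \<sigma> ts)) ` C2 \<subseteq> UU S M"
    proof clarify
      fix R ts assume "(R, ts) \<in> C2"
      moreover have "set ts \<subseteq> V" using \<open>(R, ts) \<in> C2\<close> unfolding V_def adom_def by auto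
      ultimately show "(R, map \<sigma> ts) \<in> UU S M" using symC2 sM unfolding UU_def by force
    qed
    then have "rename \<sigma> (ans q, C2) \<in> F"
      unfolding F_def rename_def using sans by (auto simp: atoms_def ans_def)
    moreover have "cq_equiv q' (rename \<sigma> (ans q, C2))" using eq1 eq2 eq3 equiv_trans by blast
    ultimately show ?thesis by blast
  qed
  ultimately show ?thesis by blast
qed



lemma fin_class:
  fixes q :: "'r cq"
  assumes wq: "wf_cq q" and fS: "finite S"
    and cand: "\<And>q'. X q' \<Longrightarrow> wf_cq q' \<and> length (ans q') = length (ans q) \<and> syms_inst (atoms q') \<subseteq> S"
    and same: "\<And>q1 q2. X q1 \<Longrightarrow> X q2 \<Longrightarrow> \<not> edit_dist q q2 < edit_dist q q1"
  shows "finitely_many_upto_equiv X"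
proof (cases "\<exists>r. X r")
  case False then show ?thesis unfolding finitely_many_upto_equiv_def by (intro exI[of _ "{}"]) auto
next
  case True
  then obtain r where r: "X r" by blast
  obtain F where F: "finite F" "\<forall>q'. wf_cq q' \<and> length (ans q') = length (ans q) \<and>
     syms_inst (atoms q') \<subseteq> S \<and> edit_dist q q' \<le> edit_dist q r \<longrightarrow> (\<exists>q''\<in>F. cq_equiv q' q'')"
    using main_fin[OF wq fS, of "edit_dist q r"] by blast
  show ?thesis unfolding finitely_many_upto_equiv_def
  proof (intro exI[of _ F] conjI allI impI)
    show "finite F" by (rule F(1))
    fix q' assume "X q'"
    then show "\<exists>q''\<in>F. cq_equiv q' q''" using F(2) cand[OF \<open>X q'\<close>] same[OF \<open>X q'\<close> r] by (meson not_le)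
  qed
qed

lemma ex_min:
  fixes f :: "'a \<Rightarrow> nat"
  assumes "\<exists>x. P x" shows "\<exists>x. P x \<and> \<not> (\<exists>y. P y \<and> f y < f x)"
proof -
  from assms obtain x0 where "P x0" by blast
  from ex_has_least_nat[of P x0 f, OF this] show ?thesis by (meson not_le)
qed

theorem theorem35:
  fixes q :: "'r cq" and Ep En :: "'r dex set"
  assumes "wf_cq q"
    and "finite Ep" and "finite En"
    and "\<forall>e\<in>Ep \<union> En. data_example (length (ans q)) e"
  shows "((\<exists>q'. candidate q Ep En q' \<and> fits q' Ep En) \<longrightarrow> (\<exists>q'. is_repair q Ep En q'))
       \<and> ((\<exists>q'. candidate q Ep En q' \<and> fits q' Ep En \<and> cq_contained q q')
            \<longrightarrow> (\<exists>q'. is_generalization q Ep En q'))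
       \<and> ((\<exists>q'. candidate q Ep En q' \<and> fits q' Ep En \<and> cq_contained q' q)
            \<longrightarrow> (\<exists>q'. is_specialization q Ep En q'))
       \<and> finitely_many_upto_equiv (is_repair q Ep En)
       \<and> finitely_many_upto_equiv (is_generalization q Ep En)
       \<and> finitely_many_upto_equiv (is_specialization q Ep En)"
proof -
  define S where "S = syms_inst (atoms q) \<union> syms_ex Ep \<union> syms_ex En"
  have fsi: "finite (syms_inst I)" if "finite I" for I :: "'r inst"
    using that unfolding syms_inst_def by simp
  have fe: "finite (fst e)" if "e \<in> Ep \<union> En" for e
    using assms(4) that unfolding data_example_def by blast
  have fS: "finite S" unfolding S_def syms_ex_def
    using assms(1,2,3) fe fsi unfolding wf_cq_def by auto
  have c: "candidate q Ep En q' \<Longrightarrow> wf_cq q' \<and> length (ans q') = length (ans q) \<and> syms_inst (atoms q') \<subseteq> S" for q'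
    unfolding candidate_def S_def by blast
  have e1: "(\<exists>q'. candidate q Ep En q' \<and> fits q' Ep En) \<longrightarrow> (\<exists>q'. is_repair q Ep En q')"
    using ex_min[of "\<lambda>q'. candidate q Ep En q' \<and> fits q' Ep En" "edit_dist q"]
    unfolding is_repair_def by auto
  have e2: "(\<exists>q'. candidate q Ep En q' \<and> fits q' Ep En \<and> cq_contained q q')
            \<longrightarrow> (\<exists>q'. is_generalization q Ep En q')"
    using ex_min[of "\<lambda>q'. candidate q Ep En q' \<and> fits q' Ep En \<and> cq_contained q q'" "edit_dist q"]
    unfolding is_generalization_def by auto
  have e3: "(\<exists>q'. candidate q Ep En q' \<and> fits q' Ep En \<and> cq_contained q' q)
            \<longrightarrow> (\<exists>q'. is_specialization q Ep En q')"
    using ex_min[of "\<lambda>q'. candidate q Ep En q' \<and> fits q' Ep En \<and> cq_contained q' q" "edit_dist q"]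
    unfolding is_specialization_def by auto
  have f1: "finitely_many_upto_equiv (is_repair q Ep En)"
    by (rule fin_class[OF assms(1) fS]) (use c in \<open>auto simp: is_repair_def\<close>)
  have f2: "finitely_many_upto_equiv (is_generalization q Ep En)"
    by (rule fin_class[OF assms(1) fS]) (use c in \<open>auto simp: is_generalization_def\<close>)
  have f3: "finitely_many_upto_equiv (is_specialization q Ep En)"
    by (rule fin_class[OF assms(1) fS]) (use c in \<open>auto simp: is_specialization_def\<close>)
  show ?thesis using e1 e2 e3 f1 f2 f3 by blast
qed


end
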